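(* Let $\mathbf n=(n_1,\dots,n_k)$ with $n_i\ge0$ integers and $\sum n_i=n$, and set $N_j=n_1+\dots+n_j$ ($N_0=0$). For every $m\in\mathbb N$, substituting $\lambda_{N_{j-1}+i}=\mu_jq^{-2(i-1)}$ for $j=1,\dots,k$, $i=1,\dots,n_j$ into $\vartheta_m(q^{-2},\lambda)$ gives $\vartheta_m(\mathbf n,q^{-2},\mu)$.
   Context: $\hat m=\frac{1-q^{-2m}}{1-q^{-2}}$. For indeterminates $\lambda=(\lambda_1,\dots,\lambda_n)$ and $m\ge1$, $\vartheta_m(q^{-2},\lambda)=\sum_{\ell=1}^n(1-q^{-2})^{\ell-1}\sum_{\mathbf d}\sum_{1\le j_1<\dots<j_\ell\le n}\lambda_{j_1}^{d_1}\cdots\lambda_{j_\ell}^{d_\ell}$ and, for $\mu=(\mu_1,\dots,\mu_k)$, $\vartheta_m(\mathbf n,q^{-2},\mu)=\sum_{\ell=1}^k(1-q^{-2})^{\ell-1}\sum_{\mathbf d}\sum_{1\le i_1<\dots<i_\ell\le k}\hat n_{i_1}\cdots\hat n_{i_\ell}\mu_{i_1}^{d_1}\cdots\mu_{i_\ell}^{d_\ell}$, where in both $\mathbf d=(d_1,\dots,d_\ell)$ runs over $\ell$-tuples of positive integers with sum $m$. *)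

theory Defs
  imports Main
begin

definition qhat :: "'a::field \<Rightarrow> nat \<Rightarrow> 'a" where
  "qhat q m = (1 - inverse (q^2) ^ m) / (1 - inverse (q^2))"

definition comps :: "nat \<Rightarrow> nat \<Rightarrow> nat list set" where
  "comps l m = {d. length d = l \<and> (\<forall>x\<in>set d. 0 < x) \<and> sum_list d = m}"

definition incr :: "nat \<Rightarrow> nat \<Rightarrow> nat list set" where
  "incr l n = {js. length js = l \<and> sorted_wrt (<) js \<and> set js \<subseteq> {1..n}}"

definition theta :: "nat \<Rightarrow> 'a::field \<Rightarrow> nat \<Rightarrow> (nat \<Rightarrow> 'a) \<Rightarrow> 'a" where
  "theta m t n lam = (\<Sum>l=1..n. (1 - t) ^ (l - 1) *
     (\<Sum>d\<in>comps l m. \<Sum>js\<in>incr l n. \<Prod>i<l. lam (js ! i) ^ (d ! i)))"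

definition theta_n :: "nat \<Rightarrow> nat \<Rightarrow> (nat \<Rightarrow> nat) \<Rightarrow> 'a::field \<Rightarrow> (nat \<Rightarrow> 'a) \<Rightarrow> 'a" where
  "theta_n m k nv q mu = (\<Sum>l=1..k. (1 - inverse (q^2)) ^ (l - 1) *
     (\<Sum>d\<in>comps l m. \<Sum>is\<in>incr l k.
        \<Prod>i<l. qhat q (nv (is ! i)) * mu (is ! i) ^ (d ! i)))"

end

theory Submission
  imports Defs "HOL-Computational_Algebra.Formal_Power_Series"
begin


definition Rf :: "'a::field \<Rightarrow> 'a fps" where
  "Rf c = Abs_fps (\<lambda>e. if e = 0 then 0 else c ^ e)"

definition Ef :: "'a::field \<Rightarrow> 'a \<Rightarrow> 'a fps" where
  "Ef a c = 1 + fps_const a * Rf c"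

lemma Rf_id: "(1 - fps_const c * fps_X) * Rf c = fps_const c * fps_X"
proof (rule fps_ext)
  fix n
  show "fps_nth ((1 - fps_const c * fps_X) * Rf c) n = fps_nth (fps_const c * fps_X) n"
    by (cases n) (auto simp: algebra_simps Rf_def)
qed

lemma Ef_id: "(1 - fps_const c * fps_X) * Ef a c = 1 - fps_const ((1 - a) * c) * fps_X"
proof -
  have "(1 - fps_const c * fps_X) * Ef a c = (1 - fps_const c * fps_X) + fps_const a * ((1 - fps_const c * fps_X) * Rf c)"
    unfolding Ef_def by (simp add: algebra_simps)
  also have "\<dots> = 1 - fps_const ((1 - a) * c) * fps_X"
    unfolding Rf_id by (simp add: fps_eq_iff algebra_simps)
  finally show ?thesis .
qed

lemma nz: "(1 - fps_const (c::'a::field) * fps_X) \<noteq> 0"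
proof
  assume "1 - fps_const c * fps_X = 0"
  then have "fps_nth (1 - fps_const c * fps_X) 0 = 0" by simp
  then show False by simp
qed

lemma block:
  fixes t mu :: "'a::field"
  shows "(\<Prod>i=1..n. Ef (1 - t) (mu * t ^ (i - 1))) = Ef (1 - t ^ n) mu"
proof (induction n)
  case 0
  then show ?case by (simp add: Ef_def)
next
  case (Suc n)
  let ?A = "1 - fps_const mu * fps_X" and ?B = "1 - fps_const (mu * t ^ n) * fps_X"
  have "(\<Prod>i=1..Suc n. Ef (1 - t) (mu * t ^ (i - 1))) = Ef (1 - t ^ n) mu * Ef (1 - t) (mu * t ^ n)"
    using Suc by simp
  also have "\<dots> = Ef (1 - t ^ Suc n) mu"
  proof -
    have "(?A * ?B) * (Ef (1 - t ^ n) mu * Ef (1 - t) (mu * t ^ n)) = (?A * Ef (1 - t ^ n) mu) * (?B * Ef (1 - t) (mu * t ^ n))"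
      by (simp add: ac_simps)
    also have "\<dots> = (1 - fps_const (t^n * mu) * fps_X) * (1 - fps_const (t * (mu * t ^ n)) * fps_X)"
      by (simp only: Ef_id) simp
    also have "\<dots> = ?B * (1 - fps_const (t ^ Suc n * mu) * fps_X)"
      by (simp add: ac_simps)
    also have "\<dots> = ?B * (?A * Ef (1 - t ^ Suc n) mu)"
      by (simp only: Ef_id) simp
    also have "\<dots> = (?A * ?B) * Ef (1 - t ^ Suc n) mu"
      by (simp only: ac_simps)
    finally have eq: "(?A * ?B) * (Ef (1 - t ^ n) mu * Ef (1 - t) (mu * t ^ n)) = (?A * ?B) * Ef (1 - t ^ Suc n) mu" .
    have "?A * ?B \<noteq> 0" using nz[of mu] nz[of "mu * t ^ n"] by (rule no_zero_divisors)
    then show ?thesis using eq mult_left_cancel by blast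
  qed
  finally show ?case .
qed

lemma prod_blocks:
  fixes k :: nat and nv :: "nat \<Rightarrow> nat" and f :: "nat \<Rightarrow> 'a::comm_monoid_mult"
  shows
  "(\<Prod>j\<in>{1..(\<Sum>r=1..k. nv r)}. f j) = (\<Prod>j=1..k. \<Prod>i=1..nv j. f ((\<Sum>r=1..j-1. nv r) + i))"
proof (induction k)
  case 0
  then show ?case by simp
next
  case (Suc k)
  let ?S = "\<Sum>r=1..k. nv r"
  have "(\<Prod>j\<in>{1..(\<Sum>r=1..Suc k. nv r)}. f j) = (\<Prod>j\<in>{1..?S + nv (Suc k)}. f j)"
    by simp
  also have "\<dots> = (\<Prod>j\<in>{1..?S}. f j) * (\<Prod>j\<in>{?S+1..?S + nv (Suc k)}. f j)"
    by (rule prod.ub_add_nat) simp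
  also have "(\<Prod>j\<in>{?S+1..?S + nv (Suc k)}. f j) = (\<Prod>i=1..nv (Suc k). f (?S + i))"
    using prod.shift_bounds_cl_nat_ivl[of f 1 ?S "nv (Suc k)"] by (simp add: add.commute)
  finally show ?case using Suc by simp
qed

lemma comps_0: "comps 0 m = (if m = 0 then {[]} else {})"
  by (auto simp: comps_def)

lemma finite_comps: "finite (comps l m)"
proof -
  have "comps l m \<subseteq> {xs. set xs \<subseteq> {0..m} \<and> length xs = l}"
    by (auto simp: comps_def member_le_sum_list)
  then show ?thesis using finite_lists_length_eq[of "{0..m}" l] by (rule finite_subset) simp
qed

lemma comps_Suc_sum:
  "(\<Sum>d\<in>comps (Suc l) m. f d) = (\<Sum>e=1..m. \<Sum>d\<in>comps l (m-e). f (e#d))"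
proof -
  have "(\<Sum>e=1..m. \<Sum>d\<in>comps l (m-e). f (e#d)) = (\<Sum>(e,d)\<in>Sigma {1..m} (\<lambda>e. comps l (m-e)). f (e # d))"
    by (rule sum.Sigma) (auto simp: finite_comps)
  also have "\<dots> = (\<Sum>d\<in>(\<lambda>(e,d). e # d) ` Sigma {1..m} (\<lambda>e. comps l (m-e)). f d)"
    by (subst sum.reindex) (auto simp: inj_on_def case_prod_unfold)
  also have "(\<lambda>(e,d). e # d) ` Sigma {1..m} (\<lambda>e. comps l (m-e)) = comps (Suc l) m"
  proof (rule set_eqI, rule iffI)
    fix d assume "d \<in> (\<lambda>(e,d). e # d) ` Sigma {1..m} (\<lambda>e. comps l (m-e))"
    then show "d \<in> comps (Suc l) m" by (auto simp: comps_def)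
  next
    fix d assume d: "d \<in> comps (Suc l) m"
    then obtain e d' where "d = e # d'" by (cases d) (auto simp: comps_def)
    with d show "d \<in> (\<lambda>(e,d). e # d) ` Sigma {1..m} (\<lambda>e. comps l (m-e))"
      by (auto simp: comps_def image_iff intro!: bexI[of _ "(e, d')"])
  qed
  finally show ?thesis by simp
qed


lemma coeff_list:
  "fps_nth (prod_list (map (\<lambda>j. fps_const (a j) * Rf (c j)) js)) m =
   (\<Sum>d\<in>comps (length js) m. \<Prod>i<length js. a (js!i) * c (js!i) ^ (d!i))"
proof (induction js arbitrary: m)
  case Nil
  then show ?case by (simp add: comps_0)
next
  case (Cons x js)
  let ?P = "prod_list (map (\<lambda>j. fps_const (a j) * Rf (c j)) js)"
  let ?l = "length js"
  have "fps_nth (prod_list (map (\<lambda>j. fps_const (a j) * Rf (c j)) (x # js))) m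
     = fps_nth ((fps_const (a x) * Rf (c x)) * ?P) m" by simp
  also have "\<dots> = (\<Sum>i=0..m. fps_nth (fps_const (a x) * Rf (c x)) i * fps_nth ?P (m - i))"
    by (rule fps_mult_nth)
  also have "\<dots> = (\<Sum>e=1..m. (a x * c x ^ e) * fps_nth ?P (m - e))"
    by (subst sum.atLeast_Suc_atMost) (auto simp: Rf_def intro!: sum.cong)
  also have "\<dots> = (\<Sum>e=1..m. \<Sum>d\<in>comps ?l (m-e). (a x * c x ^ e) * (\<Prod>i<?l. a (js!i) * c (js!i) ^ (d!i)))"
    by (simp add: Cons sum_distrib_left)
  also have "\<dots> = (\<Sum>d\<in>comps (Suc ?l) m. \<Prod>i<Suc ?l. a ((x#js)!i) * c ((x#js)!i) ^ (d!i))"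
    by (simp only: comps_Suc_sum prod.lessThan_Suc_shift) simp
  finally show ?case by simp
qed

lemma incr_card: "js \<in> incr l K \<Longrightarrow> card (set js) = l \<and> distinct js"
  by (auto simp: incr_def strict_sorted_iff distinct_card)

lemma pow_incr:
  fixes g :: "nat set \<Rightarrow> 'a::comm_monoid_add"
  shows "(\<Sum>J\<in>Pow {1..K}. g J) = (\<Sum>l=0..K. \<Sum>js\<in>incr l K. g (set js))"
proof -
  have fin: "finite (incr l K)" for l
  proof -
    have "incr l K \<subseteq> {xs. set xs \<subseteq> {1..K} \<and> length xs = l}" by (auto simp: incr_def)
    then show ?thesis using finite_lists_length_eq[of "{1..K}" l] by (rule finite_subset) simp
  qed
  have inj: "inj_on set (incr l K)" for l
    by (auto simp: inj_on_def incr_def strict_sorted_iff intro: sorted_distinct_set_unique)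
  have "(\<Sum>l=0..K. \<Sum>js\<in>incr l K. g (set js)) = (\<Sum>l=0..K. \<Sum>J\<in>set ` incr l K. g J)"
    by (simp add: sum.reindex inj)
  also have "\<dots> = (\<Sum>J\<in>(\<Union>l\<in>{0..K}. set ` incr l K). g J)"
    by (rule sum.UNION_disjoint[symmetric]) (auto simp: fin dest!: incr_card)
  also have "(\<Union>l\<in>{0..K}. set ` incr l K) = Pow {1..K}"
  proof (rule set_eqI, rule iffI)
    fix J assume "J \<in> (\<Union>l\<in>{0..K}. set ` incr l K)"
    then show "J \<in> Pow {1..K}" by (auto simp: incr_def)
  next
    fix J assume J: "J \<in> Pow {1..K}"
    then have fJ: "finite J" by (auto intro: finite_subset)
    have "card J \<le> K" using J card_mono[of "{1..K}" J] by auto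
    moreover have "sorted_list_of_set J \<in> incr (card J) K"
      using J fJ by (auto simp: incr_def)
    ultimately show "J \<in> (\<Union>l\<in>{0..K}. set ` incr l K)"
      using fJ by (auto intro!: bexI[of _ "card J"] image_eqI[of _ _ "sorted_list_of_set J"])
  qed
  finally show ?thesis by simp
qed


lemma main_coeff:
  fixes s :: "'a::field" and w c :: "nat \<Rightarrow> 'a"
  assumes m: "m \<ge> 1"
  shows "fps_nth (\<Prod>j\<in>{1..K}. Ef (s * w j) (c j)) m =
    s * (\<Sum>l=1..K. s^(l-1) * (\<Sum>d\<in>comps l m. \<Sum>js\<in>incr l K. \<Prod>i<l. w (js!i) * c (js!i) ^ (d!i)))"
proof -
  define Y where "Y j = fps_const (s * w j) * Rf (c j)" for j
  have "(\<Prod>j\<in>{1..K}. Ef (s * w j) (c j)) = (\<Prod>j\<in>{1..K}. Y j + 1)"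
    by (simp add: Ef_def Y_def add.commute)
  also have "\<dots> = (\<Sum>J\<in>Pow {1..K}. \<Prod>j\<in>J. Y j)"
    by (subst prod_add) simp_all
  also have "\<dots> = (\<Sum>l=0..K. \<Sum>js\<in>incr l K. \<Prod>j\<in>set js. Y j)"
    by (rule pow_incr)
  also have "\<dots> = (\<Sum>l=0..K. \<Sum>js\<in>incr l K. prod_list (map Y js))"
    by (intro sum.cong refl) (simp add: prod.distinct_set_conv_list incr_card)
  finally have "fps_nth (\<Prod>j\<in>{1..K}. Ef (s * w j) (c j)) m =
      (\<Sum>l=0..K. \<Sum>js\<in>incr l K. fps_nth (prod_list (map Y js)) m)"
    by (simp add: fps_sum_nth)
  also have "\<dots> = (\<Sum>l=0..K. \<Sum>js\<in>incr l K. \<Sum>d\<in>comps l m. \<Prod>i<l. (s * w (js!i)) * c (js!i) ^ (d!i))"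
    unfolding Y_def by (intro sum.cong refl) (simp add: coeff_list incr_def)
  also have "\<dots> = (\<Sum>l=0..K. s^l * (\<Sum>d\<in>comps l m. \<Sum>js\<in>incr l K. \<Prod>i<l. w (js!i) * c (js!i) ^ (d!i)))"
    by (intro sum.cong refl) (simp add: prod.distrib mult.assoc sum_distrib_left sum.swap[of _ "incr _ _"])
  also have "\<dots> = (\<Sum>l=1..K. s^l * (\<Sum>d\<in>comps l m. \<Sum>js\<in>incr l K. \<Prod>i<l. w (js!i) * c (js!i) ^ (d!i)))"
    using m by (simp add: sum.atLeast_Suc_atMost comps_0)
  also have "\<dots> = (\<Sum>l=1..K. s * (s^(l-1) * (\<Sum>d\<in>comps l m. \<Sum>js\<in>incr l K. \<Prod>i<l. w (js!i) * c (js!i) ^ (d!i))))"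
  proof (intro sum.cong refl)
    fix l assume "l \<in> {1..K}"
    then have "s ^ l = s * s ^ (l - 1)" by (cases l) auto
    then show "s ^ l * (\<Sum>d\<in>comps l m. \<Sum>js\<in>incr l K. \<Prod>i<l. w (js!i) * c (js!i) ^ (d!i)) =
      s * (s^(l-1) * (\<Sum>d\<in>comps l m. \<Sum>js\<in>incr l K. \<Prod>i<l. w (js!i) * c (js!i) ^ (d!i)))"
      by simp
  qed
  also have "\<dots> = s * (\<Sum>l=1..K. s^(l-1) * (\<Sum>d\<in>comps l m. \<Sum>js\<in>incr l K. \<Prod>i<l. w (js!i) * c (js!i) ^ (d!i)))"
    by (rule sum_distrib_left[symmetric])
  finally show ?thesis .
qed


theorem proposition4p5:
  fixes q :: "'a::field" and mu lam :: "nat \<Rightarrow> 'a"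
    and nv :: "nat \<Rightarrow> nat" and k n m :: nat
  assumes "q \<noteq> 0" and "q ^ 2 \<noteq> 1"
    and "m \<ge> 1"
    and "n = (\<Sum>r=1..k. nv r)"
    and "\<forall>j\<in>{1..k}. \<forall>i\<in>{1..nv j}.
           lam ((\<Sum>r=1..j-1. nv r) + i) = mu j * inverse (q^2) ^ (i - 1)"
  shows "theta m (inverse (q^2)) n lam = theta_n m k nv q mu"
proof -
  define t where "t = inverse (q^2)"
  define s where "s = 1 - t"
  have s0: "s \<noteq> 0"
  proof
    assume "s = 0"
    then have "inverse (q^2) = 1" by (simp add: s_def t_def)
    then have "q^2 = 1" by (metis inverse_1 inverse_inverse_eq)
    with assms(2) show False by simp
  qed
  have L: "fps_nth (\<Prod>j\<in>{1..n}. Ef (s * 1) (lam j)) m = s * theta m t n lam"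
    unfolding main_coeff[OF assms(3)] theta_def s_def by simp
  have R: "fps_nth (\<Prod>j\<in>{1..k}. Ef (s * qhat q (nv j)) (mu j)) m = s * theta_n m k nv q mu"
    unfolding main_coeff[OF assms(3)] theta_n_def s_def t_def by simp
  have "(\<Prod>j\<in>{1..n}. Ef (s * 1) (lam j)) = (\<Prod>j=1..k. \<Prod>i=1..nv j. Ef s (lam ((\<Sum>r=1..j-1. nv r) + i)))"
    unfolding assms(4) mult_1_right by (rule prod_blocks)
  also have "\<dots> = (\<Prod>j=1..k. \<Prod>i=1..nv j. Ef (1 - t) (mu j * t ^ (i - 1)))"
    using assms(5) by (auto simp: s_def t_def intro!: prod.cong)
  also have "\<dots> = (\<Prod>j=1..k. Ef (1 - t ^ nv j) (mu j))"
    by (simp only: block)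
  also have "\<dots> = (\<Prod>j\<in>{1..k}. Ef (s * qhat q (nv j)) (mu j))"
    using s0 by (simp add: qhat_def s_def t_def)
  finally have "s * theta m t n lam = s * theta_n m k nv q mu"
    using L R by simp
  then show ?thesis using s0 by (simp add: t_def)
qed

end
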